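(* Let $\Omega_n=\dfrac{\pi^{n/2}}{\Gamma\left(\frac n2+1\right)}$ and \[ \Psi(n)=-\frac{n+1}{2n}\ln\frac n2+\frac{n+2}{2n+2}\ln\frac{n+1}{2}-\frac{\ln 2\pi}{2n(n+1)}. \] Then for every $n\in\mathbb{N}$, \[ \Psi(n)-\frac{1}{3n^3}<\frac1n\ln\Omega_n-\frac1{n+1}\ln\Omega_{n+1}<\Psi(n)-\frac1{3n^3}+\frac1{2n^4}. \]
   Context: $\Omega_n$ is the volume of the unit ball in $\mathbb{R}^n$; $\Gamma$ is Euler's gamma function. *)

theory Defs
  imports "HOL-Analysis.Analysis"
begin

definition Omega :: "nat \<Rightarrow> real" where
  "Omega n = pi powr (real n / 2) / Gamma (real n / 2 + 1)"

definition Psi :: "nat \<Rightarrow> real" where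
  "Psi n = - (real n + 1) / (2 * real n) * ln (real n / 2)
           + (real n + 2) / (2 * real n + 2) * ln ((real n + 1) / 2)
           - ln (2 * pi) / (2 * real n * (real n + 1))"

end

theory Submission
  imports Defs "HOL-Real_Asymp.Real_Asymp"
begin


lemma lnL_lower:
  fixes t :: real assumes "0 \<le> t" "t < 1"
  shows "2*(t + t^3/3 + t^5/5 + t^7/7) \<le> ln (1+t) - ln (1-t)"
proof -
  let ?f = "\<lambda>x::real. ln (1+x) - ln (1-x) - 2*(x + x^3/3 + x^5/5 + x^7/7)"
  have "?f 0 \<le> ?f t"
  proof (rule DERIV_nonneg_imp_nondecreasing[OF assms(1)])
    fix x :: real assume x: "0 \<le> x" "x \<le> t"
    hence x1: "x < 1" using assms by simp
    have "x*x \<le> x" using x x1 by (intro mult_left_le) auto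
    hence q: "1 - x^2 > 0" using x1 by (simp add: power2_eq_square)
    have "DERIV ?f x :> (1/(1+x) + 1/(1-x) - 2*(1 + x^2 + x^4 + x^6))"
      by (rule derivative_eq_intros refl | use x x1 in simp)+
    moreover have "1/(1+x) + 1/(1-x) - 2*(1 + x^2 + x^4 + x^6) = 2*x^8/(1-x^2)"
    proof -
      have e: "1/(1+x) + 1/(1-x) = 2/(1-x^2)" using x x1 q
        by (simp add: field_simps power2_eq_square)
      have "(1-x^2)*(1 + x^2 + x^4 + x^6) = 1 - x^8" by algebra
      hence "2*(1 + x^2 + x^4 + x^6) = (2 - 2*x^8)/(1-x^2)" using q
        by (simp add: field_simps)
      thus ?thesis using e q by (simp add: diff_divide_distrib)
    qed
    moreover have "2*x^8/(1-x^2) \<ge> 0"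
      using x q by (intro divide_nonneg_pos) auto
    ultimately show "\<exists>y. DERIV ?f x :> y \<and> y \<ge> 0" by auto
  qed
  thus ?thesis by simp
qed


lemma lnL_upper:
  fixes t :: real assumes "0 \<le> t" "t \<le> 1/2"
  shows "ln (1+t) - ln (1-t) \<le> 2*(t + t^3/3 + t^5/5 + t^7/7 + 4*t^9/27)"
proof -
  let ?f = "\<lambda>x::real. 2*(x + x^3/3 + x^5/5 + x^7/7 + 4*x^9/27) - (ln (1+x) - ln (1-x))"
  have "?f 0 \<le> ?f t"
  proof (rule DERIV_nonneg_imp_nondecreasing[OF assms(1)])
    fix x :: real assume x: "0 \<le> x" "x \<le> t"
    hence x1: "x \<le> 1/2" using assms by simp
    have "x*x \<le> x" using x x1 by (intro mult_left_le) auto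
    hence q: "1 - x^2 > 0" using x1 by (simp add: power2_eq_square)
    have x2: "x^2 \<le> 1/4" using x x1 power_mono[of x "1/2" 2] by (simp add: power2_eq_square)
    have "DERIV ?f x :> 2*(1 + x^2 + x^4 + x^6 + 4/3*x^8) - (1/(1+x) + 1/(1-x))"
      by (rule derivative_eq_intros refl | use x x1 in simp)+
    moreover have "2*(1 + x^2 + x^4 + x^6 + 4/3*x^8) - (1/(1+x) + 1/(1-x)) = 2*x^8*(1/3 - 4/3*x^2)/(1-x^2)"
    proof -
      have e: "1/(1+x) + 1/(1-x) = 2/(1-x^2)" using x x1 q
        by (simp add: field_simps power2_eq_square)
      have "(1-x^2)*(1 + x^2 + x^4 + x^6 + 4/3*x^8) = 1 + x^8*(1/3 - 4/3*x^2)" by algebra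
      hence "2*(1 + x^2 + x^4 + x^6 + 4/3*x^8) = (2 + 2*x^8*(1/3 - 4/3*x^2))/(1-x^2)" using q
        by (simp add: field_simps)
      thus ?thesis using e q by (simp add: add_divide_distrib)
    qed
    moreover have "2*x^8*(1/3 - 4/3*x^2)/(1-x^2) \<ge> 0"
      using x q x2 by (intro divide_nonneg_pos mult_nonneg_nonneg) auto
    ultimately show "\<exists>y. DERIV ?f x :> y \<and> y \<ge> 0" by auto
  qed
  thus ?thesis by simp
qed


definition AA :: "real \<Rightarrow> real" where "AA y = 1/(12*y) - 1/(360*y^3)"
definition BB :: "real \<Rightarrow> real" where "BB y = AA y + 1/(1260*y^5)"

lemma AA_half: "AA (a/2) = 1/(6*a) - 1/(45*a^3)"
  unfolding AA_def by (simp add: field_simps power3_eq_cube)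

lemma BB_half: "BB (a/2) = 1/(6*a) - 1/(45*a^3) + 8/(315*a^5)"
  unfolding BB_def AA_half by (simp add: field_simps power_eq_if)

lemma poly1:
  fixes u :: real assumes "u \<ge> 2"
  shows "AA ((u-1)/2) - AA ((u+1)/2) \<le> 1/(3*u^2)+1/(5*u^4)+1/(7*u^6)"
proof -
  have u1: "u - 1 > 0" "u + 1 > 0" "u > 0" using assms by auto
  have id0: "\<And>a b. a > 0 \<Longrightarrow> b > 0 \<Longrightarrow> a = u - 1 \<Longrightarrow> b = u + 1 \<Longrightarrow>
     1/(3*u^2)+1/(5*u^4)+1/(7*u^6) - ((1/(6*a) - 1/(45*a^3)) - (1/(6*b) - 1/(45*b^3)))
     = (80*u^6-51*u^4+72*u^2-45)/(315*u^6*a^3*b^3)"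
  proof -
    fix a b :: real assume h: "a > 0" "b > 0" "a = u - 1" "b = u + 1"
    show "1/(3*u^2)+1/(5*u^4)+1/(7*u^6) - ((1/(6*a) - 1/(45*a^3)) - (1/(6*b) - 1/(45*b^3)))
     = (80*u^6-51*u^4+72*u^2-45)/(315*u^6*a^3*b^3)"
      using h(1,2) u1 apply (simp add: field_simps) unfolding h(3,4) by algebra
  qed
  have id: "1/(3*u^2)+1/(5*u^4)+1/(7*u^6) - (AA ((u-1)/2) - AA ((u+1)/2))
     = (80*u^6-51*u^4+72*u^2-45)/(315*u^6*(u-1)^3*(u+1)^3)"
    unfolding AA_half using u1 by (intro id0) auto
  obtain v where v: "u = v + 2" "v \<ge> 0" using assms by (metis add.commute le_add_diff_inverse diff_ge_0_iff_ge)
  have "80*u^6-51*u^4+72*u^2-45 = 4547 + 14016* v + 18048* v^2 + 12392* v^3 + 4749* v^4 + 960* v^5 + 80* v^6"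
    unfolding v by algebra
  also have "\<dots> \<ge> 0" using v by simp
  finally have "(80*u^6-51*u^4+72*u^2-45)/(315*u^6*(u-1)^3*(u+1)^3) \<ge> 0" using u1 by simp
  with id show ?thesis by linarith
qed

lemma poly2:
  fixes u :: real assumes "u \<ge> 2"
  shows "1/(3*u^2)+1/(5*u^4)+1/(7*u^6)+4/(27*u^8) \<le> BB ((u-1)/2) - BB ((u+1)/2)"
proof -
  have u1: "u - 1 > 0" "u + 1 > 0" "u > 0" using assms by auto
  have id0: "\<And>a b. a > 0 \<Longrightarrow> b > 0 \<Longrightarrow> a = u - 1 \<Longrightarrow> b = u + 1 \<Longrightarrow>
     ((1/(6*a) - 1/(45*a^3) + 8/(315*a^5)) - (1/(6*b) - 1/(45*b^3) + 8/(315*b^5)))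
      - (1/(3*u^2)+1/(5*u^4)+1/(7*u^6)+4/(27*u^8))
     = (3892*u^10 - 56*u^8 - 2720*u^6 + 3656*u^4 - 2260*u^2 + 560)/(3780*u^8*a^5*b^5)"
  proof -
    fix a b :: real assume h: "a > 0" "b > 0" "a = u - 1" "b = u + 1"
    show "((1/(6*a) - 1/(45*a^3) + 8/(315*a^5)) - (1/(6*b) - 1/(45*b^3) + 8/(315*b^5)))
      - (1/(3*u^2)+1/(5*u^4)+1/(7*u^6)+4/(27*u^8))
     = (3892*u^10 - 56*u^8 - 2720*u^6 + 3656*u^4 - 2260*u^2 + 560)/(3780*u^8*a^5*b^5)"
      using h(1,2) u1 apply (simp add: field_simps) unfolding h(3,4) by algebra
  qed
  have id: "(BB ((u-1)/2) - BB ((u+1)/2)) - (1/(3*u^2)+1/(5*u^4)+1/(7*u^6)+4/(27*u^8))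
     = (3892*u^10 - 56*u^8 - 2720*u^6 + 3656*u^4 - 2260*u^2 + 560)/(3780*u^8*(u-1)^5*(u+1)^5)"
    unfolding BB_half using u1 by (intro id0) auto
  obtain v where v: "u = v + 2" "v \<ge> 0" using assms by (metis add.commute le_add_diff_inverse diff_ge_0_iff_ge)
  have "3892*u^10 - 56*u^8 - 2720*u^6 + 3656*u^4 - 2260*u^2 + 560 = 3847008 + 19455408 * v + 44168172 * v^2 + 59274816 * v^3 + 52086216 * v^4 + 31327360 * v^5 + 13068128 * v^6 + 3735424 * v^7 + 700504 * v^8 + 77840 * v^9 + 3892 * v^10"
    unfolding v by algebra
  also have "\<dots> \<ge> 0" using v by simp
  finally have "(3892*u^10 - 56*u^8 - 2720*u^6 + 3656*u^4 - 2260*u^2 + 560)/(3780*u^8*(u-1)^5*(u+1)^5) \<ge> 0" using u1 by simp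
  with id show ?thesis by linarith
qed

definition FF :: "real \<Rightarrow> real" where
  "FF y = ln (Gamma (y+1)) - (y+1/2)*ln y + y"

lemma FF_step: assumes "y > 0" shows "FF y - FF (y+1) = (y+1/2)*ln((y+1)/y) - 1"
proof -
  have g: "Gamma (y+1+1) = (y+1) * Gamma (y+1)"
    by (rule Gamma_plus1) (use assms in \<open>auto elim!: nonpos_Ints_cases\<close>)
  have e1: "ln (Gamma (y+1+1)) = ln (y+1) + ln (Gamma (y+1))"
    proof -
    have "Gamma (y+1) > 0" using assms by (intro Gamma_real_pos) simp
    thus ?thesis unfolding g using assms by (intro ln_mult_pos) auto
  qed
  have e2: "ln ((y+1)/y) = ln (y+1) - ln y" using assms by (simp add: ln_div)
  show ?thesis unfolding FF_def e2 e1 by (simp add: algebra_simps)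
qed

lemma g_bounds:
  assumes "y \<ge> 1/2"
  shows "AA y - AA (y+1) \<le> FF y - FF (y+1)" "FF y - FF (y+1) \<le> BB y - BB (y+1)"
proof -
  define u where "u = 2*y+1"
  have u: "u \<ge> 2" using assms u_def by simp
  define t where "t = 1/u"
  have t: "0 \<le> t" "t \<le> 1/2" using u t_def by auto
  have yu: "y = (u-1)/2" "y + 1 = (u+1)/2" using u_def by auto
  have lnq: "ln ((y+1)/y) = ln (1+t) - ln (1-t)"
  proof -
    have "(y+1)/y = (1+t)/(1-t)" using u unfolding yu t_def by (simp add: field_simps)
    moreover have "1+t > 0" "1-t > 0" using t by auto
    ultimately show ?thesis by (simp add: ln_div)
  qed
  have hy: "y + 1/2 = u/2" using u_def by simp
  have FFe: "FF y - FF (y+1) = (u/2)*(ln (1+t) - ln (1-t)) - 1"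
    using FF_step[of y] assms lnq hy by simp
  have e1: "(u/2)*(2*(t + t^3/3 + t^5/5 + t^7/7)) - 1 = 1/(3*u^2)+1/(5*u^4)+1/(7*u^6)"
    using u unfolding t_def by (simp add: field_simps power_eq_if)
  have e2: "(u/2)*(2*(t + t^3/3 + t^5/5 + t^7/7 + 4*t^9/27)) - 1 = 1/(3*u^2)+1/(5*u^4)+1/(7*u^6)+4/(27*u^8)"
    using u unfolding t_def by (simp add: field_simps power_eq_if)
  have "(u/2)*(2*(t + t^3/3 + t^5/5 + t^7/7)) \<le> (u/2)*(ln (1+t) - ln (1-t))"
    using lnL_lower[of t] t u by (intro mult_left_mono) auto
  hence "1/(3*u^2)+1/(5*u^4)+1/(7*u^6) \<le> FF y - FF (y+1)" using FFe e1 by linarith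
  thus "AA y - AA (y+1) \<le> FF y - FF (y+1)" using poly1[OF u] unfolding yu(1)[symmetric] yu(2)[symmetric] by linarith
  have "(u/2)*(ln (1+t) - ln (1-t)) \<le> (u/2)*(2*(t + t^3/3 + t^5/5 + t^7/7 + 4*t^9/27))"
    using lnL_upper[of t] t u by (intro mult_left_mono) auto
  hence "FF y - FF (y+1) \<le> 1/(3*u^2)+1/(5*u^4)+1/(7*u^6)+4/(27*u^8)" using FFe e2 by linarith
  thus "FF y - FF (y+1) \<le> BB y - BB (y+1)" using poly2[OF u] unfolding yu(1)[symmetric] yu(2)[symmetric] by linarith
qed



lemma AA_le_BB: "y > 0 \<Longrightarrow> AA y \<le> BB y"
  unfolding BB_def by simp

lemma FF_lim:
  assumes y: "y \<ge> 1/2"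
  shows "\<exists>L. (\<lambda>k. FF (y + real k)) \<longlonglongrightarrow> L \<and> FF y - BB y \<le> L \<and> L \<le> FF y - AA y"
proof -
  define X where "X k = FF (y + real k) - AA (y + real k)" for k
  define Y where "Y k = FF (y + real k) - BB (y + real k)" for k
  have stp: "X (Suc k) \<le> X k" "Y k \<le> Y (Suc k)" for k
  proof -
    have "y + real k \<ge> 1/2" using y by simp
    from g_bounds[OF this] show "X (Suc k) \<le> X k" "Y k \<le> Y (Suc k)"
      unfolding X_def Y_def by (simp_all add: add_ac)
  qed
  have dec: "decseq X" using stp(1) by (intro decseq_SucI) auto
  have inc: "incseq Y" using stp(2) by (intro incseq_SucI) auto
  have XY: "Y k \<le> X k" for k unfolding X_def Y_def using AA_le_BB[of "y + real k"] y by simp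
  have bnd: "\<forall>k. Y 0 \<le> X k" using XY inc by (meson incseq_def order_trans zero_le)
  obtain L where L: "X \<longlonglongrightarrow> L" "\<forall>k. L \<le> X k" using decseq_convergent[OF dec bnd] by blast
  have A0: "(\<lambda>k. AA (y + real k)) \<longlonglongrightarrow> 0" unfolding AA_def using y by real_asymp
  have B0: "(\<lambda>k. BB (y + real k)) \<longlonglongrightarrow> 0" unfolding BB_def AA_def using y by real_asymp
  have F: "(\<lambda>k. FF (y + real k)) \<longlonglongrightarrow> L"
    using tendsto_add[OF L(1) A0] unfolding X_def by simp
  have "Y \<longlonglongrightarrow> L" using tendsto_diff[OF F B0] unfolding Y_def by simp
  hence "Y 0 \<le> L" using inc by (intro incseq_le) auto
  moreover have "L \<le> X 0" using L(2) by auto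
  ultimately show ?thesis using F unfolding X_def Y_def by auto
qed



lemma Gp1: "x > 0 \<Longrightarrow> Gamma (x + 1) = x * Gamma (x::real)"
  by (rule Gamma_plus1) (auto elim!: nonpos_Ints_cases)

lemma gamma_ratio:
  fixes x :: real assumes x: "x > 0"
  defines "h \<equiv> Gamma (x+1/2) / Gamma (x+1)"
  shows "1/(x+1/2) \<le> h^2" "h^2 \<le> 1/x"
proof -
  define G0 where "G0 = Gamma x"
  define G1 where "G1 = Gamma (x+1/2)"
  define G2 where "G2 = Gamma (x+1)"
  define G3 where "G3 = Gamma (x+3/2)"
  have pos: "G0 > 0" "G1 > 0" "G2 > 0" "G3 > 0" using x unfolding G0_def G1_def G2_def G3_def by auto
  have e2: "G2 = x * G0" unfolding G2_def G0_def using Gp1[OF x] .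
  have e3: "G3 = (x+1/2) * G1" unfolding G3_def G1_def using Gp1[of "x+1/2"] x by (simp add: add.assoc)
  have s: "sqrt pi > 0" by simp
  have b1: "Beta (x+1/2) (1/2) \<le> Beta x (1/2)" using x by (intro Beta_real_mono) auto
  have b2: "Beta (x+1) (1/2) \<le> Beta (x+1/2) (1/2)" using x by (intro Beta_real_mono) auto
  have "G1 * sqrt pi / G2 \<le> G0 * sqrt pi / G1"
    using b1 unfolding Beta_def G0_def G1_def G2_def Gamma_one_half_real by (simp add: add.assoc)
  hence "G1 * G1 \<le> G0 * G2" using pos s by (simp add: field_simps)
  hence i1: "G1^2 * x \<le> G2^2" using e2 x pos by (simp add: power2_eq_square algebra_simps)
  have "G2 * sqrt pi / G3 \<le> G1 * sqrt pi / G2"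
    using b2 unfolding Beta_def G3_def G1_def G2_def Gamma_one_half_real by (simp add: add.assoc)
  hence "G2 * G2 \<le> G1 * G3" using pos s by (simp add: field_simps)
  hence i2: "G2^2 \<le> (x+1/2) * G1^2" using e3 by (simp add: power2_eq_square algebra_simps)
  have hh: "h^2 = G1^2 / G2^2" unfolding h_def G1_def G2_def by (simp add: power_divide)
  show "h^2 \<le> 1/x" unfolding hh using i1 pos x by (simp add: field_simps)
  show "1/(x+1/2) \<le> h^2" unfolding hh using i2 pos x by (simp add: field_simps)
qed

lemma dup_real:
  fixes x :: real assumes x: "x > 0"
  shows "Gamma x * Gamma (x + 1/2) = exp ((1 - 2*x) * ln 2) * sqrt pi * Gamma (2*x)"
proof -
  have c1: "complex_of_real x \<notin> \<int>\<^sub>\<le>\<^sub>0" "complex_of_real x + 1/2 \<notin> \<int>\<^sub>\<le>\<^sub>0"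
  proof -
    have "x \<notin> \<int>\<^sub>\<le>\<^sub>0" "x + 1/2 \<notin> \<int>\<^sub>\<le>\<^sub>0" using x by (auto dest: nonpos_Ints_nonpos)
    moreover have "complex_of_real x + 1/2 = complex_of_real (x + 1/2)" by simp
    ultimately show "complex_of_real x \<notin> \<int>\<^sub>\<le>\<^sub>0" "complex_of_real x + 1/2 \<notin> \<int>\<^sub>\<le>\<^sub>0"
      by (simp_all only: of_real_in_nonpos_Ints_iff not_False_eq_True)
  qed
  have a1: "complex_of_real (x + 1/2) = complex_of_real x + 1/2" by simp
  have a2: "complex_of_real (2*x) = 2 * complex_of_real x" by simp
  have a3: "complex_of_real ((1 - 2*x) * ln 2) = (1 - 2 * complex_of_real x) * complex_of_real (ln 2)" by simp
  have "complex_of_real (Gamma x * Gamma (x + 1/2)) = Gamma (complex_of_real x) * Gamma (complex_of_real x + 1/2)"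
    unfolding of_real_mult Gamma_complex_of_real[symmetric] a1 ..
  also have "\<dots> = exp ((1 - 2 * complex_of_real x) * complex_of_real (ln 2)) * complex_of_real (sqrt pi) * Gamma (2 * complex_of_real x)"
    by (rule Gamma_legendre_duplication[OF c1])
  also have "\<dots> = complex_of_real (exp ((1 - 2*x) * ln 2) * sqrt pi * Gamma (2*x))"
    by (simp flip: Gamma_complex_of_real exp_of_real)
  finally have "complex_of_real (Gamma x * Gamma (x + 1/2)) = complex_of_real (exp ((1 - 2*x) * ln 2) * sqrt pi * Gamma (2*x))" .
  thus ?thesis using of_real_eq_iff by blast
qed



definition CC :: real where "CC = ln (2*pi)/2"

lemma FF_half: "FF (1/2 + real k) = ln (Gamma (real k + 3/2)) - (real k + 1) * ln (real k + 1/2) + real k + 1/2"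
  unfolding FF_def by (simp add: add_ac)

lemma FF_one: "FF (1 + real k) = ln (Gamma (real k + 2)) - (real k + 3/2) * ln (real k + 1) + real k + 1"
  unfolding FF_def by (simp add: add_ac)

lemma d_bounds:
  fixes k :: nat
  shows "FF (1/2 + real k) - FF (1 + real k) \<le> -(1/2)*ln (real k + 1) - (real k + 1) * ln (real k + 1/2) + (real k + 3/2) * ln (real k + 1) - 1/2"
        "-(1/2)*ln (real k + 3/2) - (real k + 1) * ln (real k + 1/2) + (real k + 3/2) * ln (real k + 1) - 1/2 \<le> FF (1/2 + real k) - FF (1 + real k)"
proof -
  define x where "x = real k + 1"
  have x: "x > 0" unfolding x_def by simp
  define h where "h = Gamma (x+1/2) / Gamma (x+1)"
  have G: "Gamma (x+1/2) > 0" "Gamma (x+1) > 0" using x by auto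
  have hp: "h > 0" unfolding h_def using G by simp
  have xx: "x + 1/2 = real k + 3/2" "x + 1 = real k + 2" unfolding x_def by auto
  have lnh: "ln h = ln (Gamma (real k + 3/2)) - ln (Gamma (real k + 2))"
  proof -
    have G': "Gamma (real k + 3/2) > 0" "Gamma (real k + 2) > 0" by (intro Gamma_real_pos; simp)+
    show ?thesis unfolding h_def xx by (rule ln_divide_pos[OF G'])
  qed
  have r1: "1/(x+1/2) \<le> h^2" "h^2 \<le> 1/x" using gamma_ratio[OF x] unfolding h_def by auto
  have "ln (h^2) \<le> ln (1/x)" using r1 hp x by (subst ln_le_cancel_iff) auto
  hence u: "2 * ln h \<le> - ln (real k + 1)" using hp x by (simp add: ln_realpow ln_div x_def)
  have "ln (1/(x+1/2)) \<le> ln (h^2)" using r1 hp x by (subst ln_le_cancel_iff) auto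
  hence l: "- ln (real k + 3/2) \<le> 2 * ln h" using hp x by (simp add: ln_realpow ln_div x_def add_ac)
  show "FF (1/2 + real k) - FF (1 + real k) \<le> -(1/2)*ln (real k + 1) - (real k + 1) * ln (real k + 1/2) + (real k + 3/2) * ln (real k + 1) - 1/2"
    unfolding FF_half FF_one using u lnh by linarith
  show "-(1/2)*ln (real k + 3/2) - (real k + 1) * ln (real k + 1/2) + (real k + 3/2) * ln (real k + 1) - 1/2 \<le> FF (1/2 + real k) - FF (1 + real k)"
    unfolding FF_half FF_one using l lnh by linarith
qed

lemma s_eq:
  fixes k :: nat
  shows "FF (1 + real k) + FF (1/2 + real k) - FF (1 + real (2*k+1)) = CC - 1/2 + (real k + 1) * (ln (real k + 1) - ln (real k + 1/2))"
proof -
  define x where "x = real k + 1"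
  have x: "x > 0" unfolding x_def by simp
  have D: "Gamma x * Gamma (x + 1/2) = exp ((1 - 2*x) * ln 2) * sqrt pi * Gamma (2*x)"
    by (rule dup_real[OF x])
  have G: "Gamma x > 0" "Gamma (x + 1/2) > 0" "Gamma (2*x) > 0" using x by auto
  have "ln (Gamma x * Gamma (x + 1/2)) = ln (exp ((1 - 2*x) * ln 2) * sqrt pi * Gamma (2*x))"
    using D by simp
  hence L: "ln (Gamma x) + ln (Gamma (x + 1/2)) = (1 - 2*x) * ln 2 + ln pi / 2 + ln (Gamma (2*x))"
    using G by (simp add: ln_mult_pos ln_sqrt)
  have g2: "Gamma (real k + 2) = x * Gamma x" using Gp1[OF x] unfolding x_def by (simp add: add_ac)
  have g3: "Gamma (real k + 3/2) = Gamma (x + 1/2)" unfolding x_def by (simp add: add_ac)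
  have g4: "Gamma (real (2*k+1) + 2) = (2*x) * Gamma (2*x)" using Gp1[of "2*x"] x unfolding x_def by (simp add: add_ac)
  have l2: "ln (Gamma (real k + 2)) = ln x + ln (Gamma x)" unfolding g2 using x G by (simp add: ln_mult_pos)
  have l4: "ln (Gamma (real (2*k+1) + 2)) = ln 2 + ln x + ln (Gamma (2*x))" unfolding g4 using x G by (simp add: ln_mult_pos)
  have F1: "FF (1 + real k) = ln x + ln (Gamma x) - (real k + 3/2) * ln x + real k + 1"
    unfolding FF_one l2 x_def ..
  have F2: "FF (1/2 + real k) = ln (Gamma (x + 1/2)) - (real k + 1) * ln (real k + 1/2) + real k + 1/2"
    unfolding FF_half g3 ..
  have ln2x: "ln (real (2*k+1) + 1) = ln 2 + ln x" unfolding x_def using ln_mult_pos[of 2 "real k + 1"] by (simp add: algebra_simps)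
  have F3: "FF (1 + real (2*k+1)) = ln 2 + ln x + ln (Gamma (2*x)) - (2*real k + 5/2) * (ln 2 + ln x) + 2 * real k + 2"
    unfolding FF_one l4 ln2x by simp
  have CCe: "CC = ln 2 / 2 + ln pi / 2" unfolding CC_def by (simp add: ln_mult_pos)
  have xk: "real k + 1 = x" unfolding x_def by auto
  have "FF (1 + real k) + FF (1/2 + real k) - FF (1 + real (2*k+1)) = CC - 1/2 + x * (ln x - ln (real k + 1/2))"
    unfolding F1 F2 F3 CCe using L unfolding x_def by (simp add: algebra_simps)
  thus ?thesis unfolding xk .
qed



lemma limits_CC:
  "(\<lambda>k. FF (1 + real k)) \<longlonglongrightarrow> CC" "(\<lambda>k. FF (1/2 + real k)) \<longlonglongrightarrow> CC"
proof -
  obtain La where La: "(\<lambda>k. FF (1 + real k)) \<longlonglongrightarrow> La" using FF_lim[of 1] by auto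
  obtain Lb where Lb: "(\<lambda>k. FF (1/2 + real k)) \<longlonglongrightarrow> Lb" using FF_lim[of "1/2"] by auto
  have dlim: "(\<lambda>k. FF (1/2 + real k) - FF (1 + real k)) \<longlonglongrightarrow> Lb - La"
    using tendsto_diff[OF Lb La] .
  have U: "(\<lambda>k::nat. -(1/2)*ln (real k + 1) - (real k + 1) * ln (real k + 1/2) + (real k + 3/2) * ln (real k + 1) - 1/2) \<longlonglongrightarrow> 0"
    by real_asymp
  have Lo: "(\<lambda>k::nat. -(1/2)*ln (real k + 3/2) - (real k + 1) * ln (real k + 1/2) + (real k + 3/2) * ln (real k + 1) - 1/2) \<longlonglongrightarrow> 0"
    by real_asymp
  have "(\<lambda>k. FF (1/2 + real k) - FF (1 + real k)) \<longlonglongrightarrow> 0"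
    by (rule tendsto_sandwich[OF _ _ Lo U]; rule always_eventually; rule allI; rule d_bounds)
  hence eq1: "Lb = La" using dlim LIMSEQ_unique by fastforce
  have sub: "(\<lambda>k. FF (1 + real (2*k+1))) \<longlonglongrightarrow> La"
  proof -
    have "strict_mono (\<lambda>k::nat. 2*k+1)" by (rule strict_monoI) simp
    from LIMSEQ_subseq_LIMSEQ[OF La this] show ?thesis by (simp add: o_def)
  qed
  have "(\<lambda>k. FF (1 + real k) + FF (1/2 + real k) - FF (1 + real (2*k+1))) \<longlonglongrightarrow> La + Lb - La"
    by (intro tendsto_intros La Lb sub)
  moreover have "(\<lambda>k::nat. CC - 1/2 + (real k + 1) * (ln (real k + 1) - ln (real k + 1/2))) \<longlonglongrightarrow> CC"
    by real_asymp
  ultimately have "La + Lb - La = CC" unfolding s_eq using LIMSEQ_unique by blast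
  hence "Lb = CC" by simp
  with eq1 La Lb show "(\<lambda>k. FF (1 + real k)) \<longlonglongrightarrow> CC" "(\<lambda>k. FF (1/2 + real k)) \<longlonglongrightarrow> CC" by auto
qed

lemma lim_half:
  assumes "n \<ge> (1::nat)"
  shows "(\<lambda>k. FF (real n/2 + real k)) \<longlonglongrightarrow> CC"
proof (cases "even n")
  case True
  then obtain m where m: "n = 2*m" by auto
  with assms have m1: "m \<ge> 1" by simp
  have "(\<lambda>k. FF (1 + real (k + (m-1)))) \<longlonglongrightarrow> CC"
    using LIMSEQ_ignore_initial_segment[OF limits_CC(1), of "m-1"] by simp
  moreover have "(\<lambda>k. FF (real n/2 + real k)) = (\<lambda>k. FF (1 + real (k + (m-1))))"
  proof
    fix k
    have "real n/2 + real k = 1 + real (k + (m-1))" using m m1 by (simp add: of_nat_diff)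
    thus "FF (real n/2 + real k) = FF (1 + real (k + (m-1)))" by (rule arg_cong)
  qed
  ultimately show ?thesis by simp
next
  case False
  then obtain m where m: "n = 2*m+1" using oddE by blast
  have "(\<lambda>k. FF (1/2 + real (k + m))) \<longlonglongrightarrow> CC"
    using LIMSEQ_ignore_initial_segment[OF limits_CC(2), of m] by simp
  moreover have "(\<lambda>k. FF (real n/2 + real k)) = (\<lambda>k. FF (1/2 + real (k + m)))"
  proof
    fix k
    have "real n/2 + real k = 1/2 + real (k + m)" using m by simp
    thus "FF (real n/2 + real k) = FF (1/2 + real (k + m))" by (rule arg_cong)
  qed
  ultimately show ?thesis by simp
qed

lemma mu_bounds:
  assumes "n \<ge> (1::nat)"
  shows "AA (real n/2) \<le> FF (real n/2) - CC" "FF (real n/2) - CC \<le> BB (real n/2)"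
proof -
  have y: "real n/2 \<ge> 1/2" using assms by simp
  obtain L where L: "(\<lambda>k. FF (real n/2 + real k)) \<longlonglongrightarrow> L" "FF (real n/2) - BB (real n/2) \<le> L" "L \<le> FF (real n/2) - AA (real n/2)"
    using FF_lim[OF y] by auto
  have "L = CC" using LIMSEQ_unique[OF L(1) lim_half[OF assms]] .
  thus "AA (real n/2) \<le> FF (real n/2) - CC" "FF (real n/2) - CC \<le> BB (real n/2)" using L by auto
qed



lemma lnOmega:
  assumes "y > 0"
  shows "ln (pi powr y / Gamma (y + 1)) = y * ln pi - FF y - (y + 1/2) * ln y + y"
proof -
  have "Gamma (y+1) > 0" using assms by (intro Gamma_real_pos) simp
  moreover have "pi powr y > 0" by simp
  ultimately have "ln (pi powr y / Gamma (y + 1)) = y * ln pi - ln (Gamma (y+1))"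
    by (simp add: ln_divide_pos)
  thus ?thesis unfolding FF_def by simp
qed

lemma polylo:
  fixes a :: real assumes "a \<ge> 1"
  shows "(1/(6*(a+1)) - 1/(45*(a+1)^3))/(a+1) - (1/(6*a) - 1/(45*a^3) + 8/(315*a^5))/a + 1/(3*a^3) > 0"
proof -
  have a: "a > 0" "a + 1 > 0" using assms by auto
  have id0: "\<And>b. b > 0 \<Longrightarrow> b = a + 1 \<Longrightarrow>
    (1/(6*b) - 1/(45*b^3))/b - (1/(6*a) - 1/(45*a^3) + 8/(315*a^5))/a + 1/(3*a^3)
    = (315*a^8+1526*a^7+2910*a^6+2704*a^5+1125*a^4-26*a^3-226*a^2-96*a-16)/(630*a^6*b^6)"
  proof -
    fix b :: real assume h: "b > 0" "b = a + 1"
    show "(1/(6*b) - 1/(45*b^3))/b - (1/(6*a) - 1/(45*a^3) + 8/(315*a^5))/a + 1/(3*a^3)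
    = (315*a^8+1526*a^7+2910*a^6+2704*a^5+1125*a^4-26*a^3-226*a^2-96*a-16)/(630*a^6*b^6)"
      using h(1) a apply (simp add: field_simps) unfolding h(2) by algebra
  qed
  obtain v where v: "a = v + 1" "v \<ge> 0" using assms by (metis add.commute le_add_diff_inverse diff_ge_0_iff_ge)
  have "315*a^8+1526*a^7+2910*a^6+2704*a^5+1125*a^4-26*a^3-226*a^2-96*a-16
     = 8216 + 48056 * v + 118002 * v^2 + 160764 * v^3 + 133755 * v^4 + 69850 * v^5 + 22412 * v^6 + 4046 * v^7 + 315 * v^8"
    unfolding v by algebra
  also have "\<dots> > 0" using v by (simp add: add_pos_nonneg)
  finally show ?thesis using id0[of "a+1"] a by simp
qed

lemma polyup:
  fixes a :: real assumes "a \<ge> 1"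
  shows "-1/(3*a^3) + 1/(2*a^4) - (1/(6*(a+1)) - 1/(45*(a+1)^3) + 8/(315*(a+1)^5))/(a+1) + (1/(6*a) - 1/(45*a^3))/a > 0"
proof -
  have a: "a > 0" "a + 1 > 0" using assms by auto
  have id0: "\<And>b. b > 0 \<Longrightarrow> b = a + 1 \<Longrightarrow>
    -1/(3*a^3) + 1/(2*a^4) - (1/(6*b) - 1/(45*b^3) + 8/(315*b^5))/b + (1/(6*a) - 1/(45*a^3))/a
    = (364*a^7+1783*a^6+3500*a^5+3360*a^4+1596*a^3+301*a^2)/(630*a^6*b^6)"
  proof -
    fix b :: real assume h: "b > 0" "b = a + 1"
    show "-1/(3*a^3) + 1/(2*a^4) - (1/(6*b) - 1/(45*b^3) + 8/(315*b^5))/b + (1/(6*a) - 1/(45*a^3))/a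
    = (364*a^7+1783*a^6+3500*a^5+3360*a^4+1596*a^3+301*a^2)/(630*a^6*b^6)"
      using h(1) a apply (simp add: field_simps) unfolding h(2) by algebra
  qed
  have "364*a^7+1783*a^6+3500*a^5+3360*a^4+1596*a^3+301*a^2 > 0" using a by (simp add: add_pos_pos)
  thus ?thesis using id0[of "a+1"] a by simp
qed



lemma Dalg:
  fixes a b P F1 F2 L1 L2 Q :: real
  assumes "a > 0" "b > 0" "b = a + 1"
  shows "((a/2)*P - F1 - (a/2+1/2)*L1 + a/2)/a - ((b/2)*P - F2 - (b/2+1/2)*L2 + b/2)/b
    = (- b / (2 * a) * L1 + (b + 1) / (2 * b) * L2 - Q / (2 * a * b)) + (F2 - Q/2)/b - (F1 - Q/2)/a"
  using assms(1,2) apply (simp add: field_simps) unfolding assms(3) by algebra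

theorem theorem5:
  fixes n :: nat
  assumes "n \<ge> 1"
  shows "Psi n - 1 / (3 * real n ^ 3)
           < ln (Omega n) / real n - ln (Omega (n + 1)) / real (n + 1)
       \<and> ln (Omega n) / real n - ln (Omega (n + 1)) / real (n + 1)
           < Psi n - 1 / (3 * real n ^ 3) + 1 / (2 * real n ^ 4)"
proof -
  define a where "a = real n"
  have a: "a \<ge> 1" "a > 0" using assms unfolding a_def by auto
  have rn: "real (n+1) = a + 1" unfolding a_def by simp
  have O1: "ln (Omega n) = (a/2) * ln pi - FF (a/2) - (a/2 + 1/2) * ln (a/2) + a/2"
    unfolding Omega_def a_def[symmetric] using a by (intro lnOmega) simp
  have O2: "ln (Omega (n+1)) = ((a+1)/2) * ln pi - FF ((a+1)/2) - ((a+1)/2 + 1/2) * ln ((a+1)/2) + (a+1)/2"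
    unfolding Omega_def rn using a by (intro lnOmega) simp
  have Ps: "Psi n = - (a + 1) / (2 * a) * ln (a / 2) + (a + 2) / (2 * a + 2) * ln ((a + 1) / 2)
           - ln (2 * pi) / (2 * a * (a + 1))" unfolding Psi_def a_def ..
  define m1 where "m1 = FF (a/2) - CC"
  define m2 where "m2 = FF ((a+1)/2) - CC"
  have Dform: "ln (Omega n) / real n - ln (Omega (n + 1)) / real (n + 1) = Psi n + m2/(a+1) - m1/a"
  proof -
    have e: "2 * a + 2 = 2 * (a+1)" "a + 2 = (a+1) + 1" by simp_all
    show ?thesis
      unfolding O1 O2 Ps rn a_def[symmetric] m1_def m2_def CC_def e
      by (rule Dalg) (use a in auto)
  qed
  have b1: "AA (a/2) \<le> m1" "m1 \<le> BB (a/2)" using mu_bounds[OF assms] unfolding m1_def a_def by auto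
  have b2: "AA ((a+1)/2) \<le> m2" "m2 \<le> BB ((a+1)/2)" using mu_bounds[of "n+1"] unfolding m2_def rn by auto
  have h1: "AA ((a+1)/2)/(a+1) \<le> m2/(a+1)" "m2/(a+1) \<le> BB ((a+1)/2)/(a+1)"
    using b2 a by (auto intro: divide_right_mono)
  have h2: "AA (a/2)/a \<le> m1/a" "m1/a \<le> BB (a/2)/a"
    using b1 a by (auto intro: divide_right_mono)
  have pl: "AA ((a+1)/2)/(a+1) - BB (a/2)/a + 1/(3*a^3) > 0"
    using polylo[OF a(1)] unfolding BB_half AA_half .
  have pu: "-1/(3*a^3) + 1/(2*a^4) - BB ((a+1)/2)/(a+1) + AA (a/2)/a > 0"
    using polyup[OF a(1)] unfolding BB_half AA_half .
  show ?thesis unfolding Dform unfolding a_def[symmetric] using h1 h2 pl pu by linarith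
qed

end
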